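(* Let $p$ be a prime, let $d,n$ be natural numbers, and let $A\subseteq\{0,1\}^n\subseteq\mathbb{F}_p^n$ satisfy $|A|>p\cdot|\mathcal{M}_{\lfloor d/p\rfloor}(p,n)|$. Then $\mathsf{int\text{-}deg}_p(p\cdot A)>d$.
   Context: For $A\subseteq\mathbb{F}_p^n$ and a positive integer $k$, $k\cdot A=\{a_1+\dots+a_k \mid a_i\in A\}$ is the $k$-fold sumset (addition in $\mathbb{F}_p^n$). A polynomial in $\mathbb{F}_p[x_1,\dots,x_n]$ is $p$-reduced if each variable appears with individual degree at most $p-1$; every function $\mathbb{F}_p^n\to\mathbb{F}_p$ is represented by a unique $p$-reduced polynomial. For $B\subseteq\mathbb{F}_p^n$, $\mathsf{int\text{-}deg}_p(B)$ is the minimum $d$ such that every function $f:B\to\mathbb{F}_p$ agrees on $B$ with some $p$-reduced polynomial of total degree at most $d$. $\mathcal{M}_k(p,n)$ denotes the set of monomials in $x_1,\dots,x_n$ in which each variable has degree at most $p-1$ and the total degree is at most $k$. *)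

theory Defs
  imports Main "HOL-Computational_Algebra.Primes"
begin

definition Fpn :: "nat \<Rightarrow> nat \<Rightarrow> (nat \<Rightarrow> nat) set" where
  "Fpn p n = {x. (\<forall>i<n. x i < p) \<and> (\<forall>i\<ge>n. x i = 0)}"

definition cube :: "nat \<Rightarrow> (nat \<Rightarrow> nat) set" where
  "cube n = {x. (\<forall>i<n. x i \<le> 1) \<and> (\<forall>i\<ge>n. x i = 0)}"

definition kfold_sumset :: "nat \<Rightarrow> nat \<Rightarrow> (nat \<Rightarrow> nat) set \<Rightarrow> (nat \<Rightarrow> nat) set" where
  "kfold_sumset p k A = {(\<lambda>i. (\<Sum>j<k. a j i) mod p) | a. \<forall>j<k. a j \<in> A}"

definition monomials :: "nat \<Rightarrow> nat \<Rightarrow> nat \<Rightarrow> (nat \<Rightarrow> nat) set" where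
  "monomials k p n = {e. (\<forall>i<n. e i \<le> p - 1) \<and> (\<forall>i\<ge>n. e i = 0) \<and> (\<Sum>i<n. e i) \<le> k}"

definition eval_poly :: "nat \<Rightarrow> nat \<Rightarrow> nat \<Rightarrow> ((nat \<Rightarrow> nat) \<Rightarrow> nat) \<Rightarrow> (nat \<Rightarrow> nat) \<Rightarrow> nat" where
  "eval_poly d p n c x = (\<Sum>e\<in>monomials d p n. c e * (\<Prod>i<n. x i ^ e i)) mod p"

definition interpolates :: "nat \<Rightarrow> nat \<Rightarrow> nat \<Rightarrow> (nat \<Rightarrow> nat) set \<Rightarrow> bool" where
  "interpolates d p n B \<longleftrightarrow>
     (\<forall>f. (\<forall>x\<in>B. f x < p) \<longrightarrow> (\<exists>c. \<forall>x\<in>B. f x = eval_poly d p n c x))"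

definition int_deg :: "nat \<Rightarrow> nat \<Rightarrow> (nat \<Rightarrow> nat) set \<Rightarrow> nat" where
  "int_deg p n B = (LEAST d. interpolates d p n B)"

end

theory Submission
  imports Defs "HOL-Number_Theory.Number_Theory" "HOL-Library.FuncSet"
begin


definition NF :: "nat \<Rightarrow> 'x set \<Rightarrow> ('x \<Rightarrow> int) set" where
  "NF p S = {h. (\<forall>b. 0 \<le> h b \<and> h b < int p) \<and> (\<forall>b. b \<notin> S \<longrightarrow> h b = 0)}"

definition Wsp :: "nat \<Rightarrow> 'x set \<Rightarrow> 'r set \<Rightarrow> ('r \<Rightarrow> 'x \<Rightarrow> int) \<Rightarrow> ('x \<Rightarrow> int) set" where
  "Wsp p S R F = {h \<in> NF p S. \<forall>r\<in>R. [(\<Sum>b\<in>S. F r b * h b) = 0] (mod int p)}"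

lemma mod_unique_int:
  fixes x y q :: int
  assumes "0 \<le> x" "x < q" "0 \<le> y" "y < q" "q dvd (x - y)"
  shows "x = y"
proof -
  have "x mod q = y mod q" using assms(5) by (simp add: mod_eq_dvd_iff)
  thus ?thesis using assms by simp
qed

lemma NF_card:
  assumes "finite S" "p > 0"
  shows "finite (NF p S) \<and> card (NF p S) = p ^ card S"
proof -
  let ?E = "\<lambda>g b. if b \<in> S then g b else (0::int)"
  have img: "NF p S = ?E ` (S \<rightarrow>\<^sub>E {0..<int p})"
  proof
    show "NF p S \<subseteq> ?E ` (S \<rightarrow>\<^sub>E {0..<int p})"
    proof
      fix h assume h: "h \<in> NF p S"
      have "h = ?E (restrict h S)" using h by (auto simp: NF_def fun_eq_iff)
      moreover have "restrict h S \<in> S \<rightarrow>\<^sub>E {0..<int p}" using h by (auto simp: NF_def)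
      ultimately show "h \<in> ?E ` (S \<rightarrow>\<^sub>E {0..<int p})" by blast
    qed
  next
    show "?E ` (S \<rightarrow>\<^sub>E {0..<int p}) \<subseteq> NF p S" using assms(2) by (auto simp: NF_def PiE_def Pi_def)
  qed
  have inj: "inj_on ?E (S \<rightarrow>\<^sub>E {0..<int p})"
  proof (rule inj_onI)
    fix g1 g2 assume g: "g1 \<in> S \<rightarrow>\<^sub>E {0..<int p}" "g2 \<in> S \<rightarrow>\<^sub>E {0..<int p}" "?E g1 = ?E g2"
    show "g1 = g2"
    proof (rule PiE_ext[OF g(1) g(2)])
      fix x assume "x \<in> S" thus "g1 x = g2 x" using fun_cong[OF g(3), of x] by simp
    qed
  qed
  show ?thesis using img inj assms by (simp add: card_image card_PiE finite_PiE)
qed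

lemma W_count:
  assumes "finite S" "finite R" "p > 0"
  shows "p ^ card S \<le> p ^ card R * card (Wsp p S R F)"
proof -
  define \<phi> where "\<phi> h = restrict (\<lambda>r. (\<Sum>b\<in>S. F r b * h b) mod int p) R" for h
  define Fib where "Fib v = {h \<in> NF p S. \<phi> h = v}" for v
  have fin: "finite (NF p S)" "card (NF p S) = p ^ card S" using NF_card[OF assms(1) assms(3)] by auto
  have finW: "finite (Wsp p S R F)" using fin(1) by (rule finite_subset[rotated]) (auto simp: Wsp_def)
  have imgsub: "\<phi> ` NF p S \<subseteq> R \<rightarrow>\<^sub>E {0..<int p}" using assms(3) by (auto simp: \<phi>_def)
  have cardimg: "card (\<phi> ` NF p S) \<le> p ^ card R"
  proof -
    have "card (\<phi> ` NF p S) \<le> card (R \<rightarrow>\<^sub>E {0..<int p})"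
      by (rule card_mono[OF finite_PiE[OF assms(2)] imgsub]) simp
    thus ?thesis using assms(2) by (simp add: card_PiE)
  qed
  have fibcard: "card (Fib v) \<le> card (Wsp p S R F)" if vin: "v \<in> \<phi> ` NF p S" for v
  proof -
    obtain h0 where h0: "h0 \<in> NF p S" "\<phi> h0 = v" using vin by blast
    define \<psi> where "\<psi> h = (\<lambda>b. (h b - h0 b) mod int p)" for h
    have "inj_on \<psi> (Fib v)"
    proof (rule inj_onI)
      fix h1 h2 assume a: "h1 \<in> Fib v" "h2 \<in> Fib v" "\<psi> h1 = \<psi> h2"
      show "h1 = h2"
      proof
        fix b
        have "(h1 b - h0 b) mod int p = (h2 b - h0 b) mod int p"
          using fun_cong[OF a(3), of b] by (simp add: \<psi>_def)
        hence "int p dvd (h1 b - h0 b) - (h2 b - h0 b)" by (simp add: mod_eq_dvd_iff)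
        hence "int p dvd h1 b - h2 b" by simp
        moreover have "0 \<le> h1 b" "h1 b < int p" "0 \<le> h2 b" "h2 b < int p"
          using a by (auto simp: Fib_def NF_def)
        ultimately show "h1 b = h2 b" using mod_unique_int by blast
      qed
    qed
    moreover have "\<psi> ` Fib v \<subseteq> Wsp p S R F"
    proof
      fix k assume "k \<in> \<psi> ` Fib v"
      then obtain h where h: "h \<in> Fib v" "k = \<psi> h" by auto
      have nf: "k \<in> NF p S" using h h0 assms(3) by (auto simp: Fib_def NF_def \<psi>_def)
      have "[(\<Sum>b\<in>S. F r b * k b) = 0] (mod int p)" if r: "r \<in> R" for r
      proof -
        have "[(\<Sum>b\<in>S. F r b * k b) = (\<Sum>b\<in>S. F r b * (h b - h0 b))] (mod int p)"
          unfolding h(2) \<psi>_def by (intro cong_sum cong_mult cong_refl) simp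
        also have "(\<Sum>b\<in>S. F r b * (h b - h0 b)) = (\<Sum>b\<in>S. F r b * h b) - (\<Sum>b\<in>S. F r b * h0 b)"
          by (simp add: algebra_simps sum_subtractf)
        also have "[\<dots> = 0] (mod int p)"
        proof -
          have "\<phi> h r = \<phi> h0 r" using h(1) h0(2) by (simp add: Fib_def)
          hence "(\<Sum>b\<in>S. F r b * h b) mod int p = (\<Sum>b\<in>S. F r b * h0 b) mod int p"
            using r by (simp add: \<phi>_def)
          thus ?thesis by (simp add: cong_def mod_diff_cong) 
        qed
        finally show ?thesis .
      qed
      thus "k \<in> Wsp p S R F" using nf by (simp add: Wsp_def)
    qed
    ultimately show ?thesis using card_inj_on_le finW by blast
  qed
  have "NF p S = (\<Union>v\<in>\<phi> ` NF p S. Fib v)" by (auto simp: Fib_def)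
  hence "card (NF p S) \<le> (\<Sum>v\<in>\<phi> ` NF p S. card (Fib v))"
    using card_UN_le[of "\<phi> ` NF p S" Fib] fin(1) by simp
  also have "\<dots> \<le> (\<Sum>v\<in>\<phi> ` NF p S. card (Wsp p S R F))" by (rule sum_mono) (rule fibcard)
  also have "\<dots> = card (\<phi> ` NF p S) * card (Wsp p S R F)" by simp
  also have "\<dots> \<le> p ^ card R * card (Wsp p S R F)" using cardimg by simp
  finally show ?thesis using fin(2) by simp
qed



lemma Wsp_comb:
  assumes "h1 \<in> Wsp p S R F" "h2 \<in> Wsp p S R F" "p > 0"
  shows "(\<lambda>b. (h1 b + s * h2 b) mod int p) \<in> Wsp p S R F"
proof -
  have nf: "(\<lambda>b. (h1 b + s * h2 b) mod int p) \<in> NF p S"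
    using assms by (auto simp: Wsp_def NF_def)
  have "[(\<Sum>b\<in>S. F r b * ((h1 b + s * h2 b) mod int p)) = 0] (mod int p)" if r: "r \<in> R" for r
  proof -
    have "[(\<Sum>b\<in>S. F r b * ((h1 b + s * h2 b) mod int p)) = (\<Sum>b\<in>S. F r b * (h1 b + s * h2 b))] (mod int p)"
      by (intro cong_sum cong_mult cong_refl) simp
    also have "(\<Sum>b\<in>S. F r b * (h1 b + s * h2 b)) = (\<Sum>b\<in>S. F r b * h1 b) + s * (\<Sum>b\<in>S. F r b * h2 b)"
      by (simp add: algebra_simps sum.distrib sum_distrib_left)
    also have "[\<dots> = 0 + s * 0] (mod int p)"
      using assms(1,2) r by (intro cong_add cong_mult cong_refl) (auto simp: Wsp_def)
    finally show ?thesis by simp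
  qed
  thus ?thesis using nf by (simp add: Wsp_def)
qed

lemma zero_Wsp: "p > 0 \<Longrightarrow> (\<lambda>b. 0) \<in> Wsp p S R F"
  by (simp add: Wsp_def NF_def)

lemma W_big:
  assumes "finite S" "finite R" "p > 0"
  shows "p ^ (card S - card R) \<le> card (Wsp p S R F)"
proof (cases "card R \<le> card S")
  case True
  have "p ^ card R * p ^ (card S - card R) = p ^ card S" using True by (simp flip: power_add)
  hence "p ^ card R * p ^ (card S - card R) \<le> p ^ card R * card (Wsp p S R F)"
    using W_count[OF assms, of F] by simp
  thus ?thesis using assms(3) by simp
next
  case False
  have "finite (Wsp p S R F)"
    using NF_card[OF assms(1) assms(3)] by (rule finite_subset[rotated, OF conjunct1]) (auto simp: Wsp_def)
  hence "card (Wsp p S R F) \<ge> 1" using zero_Wsp[of p S R F] assms(3) 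
    by (metis One_nat_def Suc_leI card_gt_0_iff empty_iff)
  thus ?thesis using False by simp
qed

lemma support_lemma:
  assumes "finite S" "finite R" "prime p"
  shows "\<exists>h\<in>Wsp p S R F. card S \<le> card {b\<in>S. h b \<noteq> 0} + card R"
proof -
  have p0: "p > 0" "p > 1" using prime_gt_1_nat[OF assms(3)] by auto
  let ?W = "Wsp p S R F"
  let ?f = "\<lambda>h. card {b\<in>S. h b \<noteq> 0}"
  have finW: "finite ?W"
    using NF_card[OF assms(1) p0(1)] by (rule finite_subset[rotated, OF conjunct1]) (auto simp: Wsp_def)
  have neW: "?W \<noteq> {}" using zero_Wsp[OF p0(1)] by blast
  define M where "M = Max (?f ` ?W)"
  have "M \<in> ?f ` ?W" unfolding M_def using finW neW by (intro Max_in) auto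
  then obtain h where h: "h \<in> ?W" "?f h = M" by auto
  have hmax: "?f h' \<le> ?f h" if "h' \<in> ?W" for h'
    using that finW h(2) unfolding M_def by (simp add: Max_ge)
  show ?thesis
  proof (rule ccontr)
    assume "\<not> ?thesis"
    hence lt: "?f h + card R < card S" using h(1) by force
    let ?U = "{b\<in>S. h b \<noteq> 0}"
    have finU: "finite ?U" using assms(1) by simp
    define \<rho> where "\<rho> k = restrict k ?U" for k :: "'a \<Rightarrow> int"
    have "\<rho> ` ?W \<subseteq> ?U \<rightarrow>\<^sub>E {0..<int p}"
    proof
      fix x assume "x \<in> \<rho> ` ?W"
      then obtain g where g: "g \<in> ?W" "x = restrict g ?U" unfolding \<rho>_def by blast
      have "restrict g ?U \<in> ?U \<rightarrow>\<^sub>E {0..<int p}"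
        by (rule restrict_PiE_iff[THEN iffD2]) (use g(1) in \<open>auto simp: Wsp_def NF_def\<close>)
      thus "x \<in> ?U \<rightarrow>\<^sub>E {0..<int p}" using g(2) by simp
    qed
    hence "card (\<rho> ` ?W) \<le> card (?U \<rightarrow>\<^sub>E {0..<int p})"
      by (intro card_mono finite_PiE finU) auto
    also have "\<dots> = p ^ ?f h" using finU by (simp add: card_PiE)
    also have "\<dots> < p ^ (card S - card R)" using lt p0 by (intro power_strict_increasing) auto
    also have "\<dots> \<le> card ?W" by (rule W_big[OF assms(1,2) p0(1)])
    finally have "\<not> inj_on \<rho> ?W" using card_image by fastforce
    then obtain h1 h2 where hh: "h1 \<in> ?W" "h2 \<in> ?W" "h1 \<noteq> h2" "\<rho> h1 = \<rho> h2"
      unfolding inj_on_def by blast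
    define k where "k = (\<lambda>b. (h1 b + (-1) * h2 b) mod int p)"
    have kW: "k \<in> ?W" unfolding k_def by (rule Wsp_comb[OF hh(1,2) p0(1)])
    obtain b0 where b0: "h1 b0 \<noteq> h2 b0" using hh(3) by blast
    have kb0: "k b0 \<noteq> 0"
    proof
      assume "k b0 = 0"
      hence "int p dvd h1 b0 - h2 b0" by (simp add: k_def mod_eq_0_iff_dvd)
      moreover have "0 \<le> h1 b0" "h1 b0 < int p" "0 \<le> h2 b0" "h2 b0 < int p"
        using hh(1,2) by (auto simp: Wsp_def NF_def)
      ultimately show False using mod_unique_int b0 by blast
    qed
    have kU: "k b = 0" if "b \<in> ?U" for b
    proof -
      have "h1 b = h2 b" using fun_cong[OF hh(4), of b] that by (simp add: \<rho>_def)
      thus ?thesis by (simp add: k_def)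
    qed
    have b0S: "b0 \<in> S" using kW kb0 by (auto simp: Wsp_def NF_def)
    have b0U: "b0 \<notin> ?U" using kU kb0 by blast
    hence hb0: "h b0 = 0" using b0S by simp
    define h' where "h' = (\<lambda>b. (h b + 1 * k b) mod int p)"
    have h'W: "h' \<in> ?W" unfolding h'_def by (rule Wsp_comb[OF h(1) kW p0(1)])
    have "insert b0 ?U \<subseteq> {b\<in>S. h' b \<noteq> 0}"
    proof
      fix b assume b: "b \<in> insert b0 ?U"
      show "b \<in> {b\<in>S. h' b \<noteq> 0}"
      proof (cases "b = b0")
        case True
        have "0 \<le> k b0" "k b0 < int p" using kW by (auto simp: Wsp_def NF_def)
        thus ?thesis using True b0S hb0 kb0 by (simp add: h'_def)
      next
        case False
        hence bU: "b \<in> ?U" using b by simp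
        have "0 \<le> h b" "h b < int p" using h(1) by (auto simp: Wsp_def NF_def)
        thus ?thesis using bU kU[OF bU] by (simp add: h'_def)
      qed
    qed
    hence "card (insert b0 ?U) \<le> ?f h'" using assms(1) by (intro card_mono) auto
    hence "?f h + 1 \<le> ?f h'" using b0U finU by simp
    thus False using hmax[OF h'W] by simp
  qed
qed



definition diagc :: "nat \<Rightarrow> nat \<Rightarrow> 'x set \<Rightarrow> ('x \<Rightarrow> int) \<Rightarrow> ((nat \<Rightarrow> 'x) \<Rightarrow> int) \<Rightarrow> bool" where
  "diagc p m S w T \<longleftrightarrow> (\<forall>a. (\<forall>j<m. a j \<in> S) \<longrightarrow>
      [T a = (if \<forall>j<m. a j = a 0 then w (a 0) else 0)] (mod int p))"

definition decomp :: "nat \<Rightarrow> nat \<Rightarrow> 'r set \<Rightarrow> (nat \<Rightarrow> 'r \<Rightarrow> 'x \<Rightarrow> int) \<Rightarrow>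
    (nat \<Rightarrow> 'r \<Rightarrow> (nat \<Rightarrow> 'x) \<Rightarrow> int) \<Rightarrow> ((nat \<Rightarrow> 'x) \<Rightarrow> int) \<Rightarrow> bool" where
  "decomp p m R F G T \<longleftrightarrow> (\<forall>a. [T a = (\<Sum>j<m. \<Sum>r\<in>R. F j r (a j) * G j r a)] (mod int p))"

definition indep :: "nat \<Rightarrow> (nat \<Rightarrow> 'r \<Rightarrow> (nat \<Rightarrow> 'x) \<Rightarrow> int) \<Rightarrow> bool" where
  "indep m G \<longleftrightarrow> (\<forall>j<m. \<forall>r a b. G j r (a(j:=b)) = G j r a)"

lemma contract_indep:
  assumes "indep (Suc m) G"
  shows "indep m (\<lambda>j r a. \<Sum>b\<in>S. G j r (a(m:=b)) * h b)"
  unfolding indep_def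
proof (intro allI impI)
  fix j r a b' assume j: "j < m"
  have "G j r ((a(j:=b'))(m:=b)) = G j r (a(m:=b))" for b
  proof -
    have "(a(j:=b'))(m:=b) = (a(m:=b))(j:=b')" using j by (auto simp: fun_eq_iff)
    hence "G j r ((a(j:=b'))(m:=b)) = G j r ((a(m:=b))(j:=b'))" by simp
    also have "\<dots> = G j r (a(m:=b))" using assms j unfolding indep_def by (meson less_SucI)
    finally show ?thesis .
  qed
  thus "(\<Sum>b\<in>S. G j r ((a(j:=b'))(m:=b)) * h b) = (\<Sum>b\<in>S. G j r (a(m:=b)) * h b)"
    by simp
qed

lemma contract_decomp:
  assumes "decomp p (Suc m) R F G T" "indep (Suc m) G"
    and orth: "\<forall>r\<in>R. [(\<Sum>b\<in>S. F m r b * h b) = 0] (mod int p)"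
  shows "decomp p m R F (\<lambda>j r a. \<Sum>b\<in>S. G j r (a(m:=b)) * h b) (\<lambda>a. \<Sum>b\<in>S. T (a(m:=b)) * h b)"
  unfolding decomp_def
proof
  fix a
  have Gm: "G m r (a(m:=b)) = G m r a" for r b using assms(2) by (simp add: indep_def)
  have "[(\<Sum>b\<in>S. T (a(m:=b)) * h b) =
        (\<Sum>b\<in>S. (\<Sum>j<Suc m. \<Sum>r\<in>R. F j r ((a(m:=b)) j) * G j r (a(m:=b))) * h b)] (mod int p)"
    by (intro cong_sum cong_mult cong_refl) (rule assms(1)[unfolded decomp_def, rule_format])
  also have "(\<Sum>b\<in>S. (\<Sum>j<Suc m. \<Sum>r\<in>R. F j r ((a(m:=b)) j) * G j r (a(m:=b))) * h b)
     = (\<Sum>b\<in>S. (\<Sum>j<m. \<Sum>r\<in>R. F j r (a j) * G j r (a(m:=b))) * h b)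
       + (\<Sum>b\<in>S. (\<Sum>r\<in>R. F m r b * G m r a) * h b)"
    by (simp add: Gm sum.distrib distrib_right)
  also have "(\<Sum>b\<in>S. (\<Sum>j<m. \<Sum>r\<in>R. F j r (a j) * G j r (a(m:=b))) * h b)
      = (\<Sum>j<m. \<Sum>r\<in>R. F j r (a j) * (\<Sum>b\<in>S. G j r (a(m:=b)) * h b))"
  proof -
    have "(\<Sum>b\<in>S. (\<Sum>j<m. \<Sum>r\<in>R. F j r (a j) * G j r (a(m:=b))) * h b)
       = (\<Sum>b\<in>S. \<Sum>j<m. \<Sum>r\<in>R. F j r (a j) * (G j r (a(m:=b)) * h b))"
      by (simp add: sum_distrib_right mult.assoc)
    also have "\<dots> = (\<Sum>j<m. \<Sum>b\<in>S. \<Sum>r\<in>R. F j r (a j) * (G j r (a(m:=b)) * h b))"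
      by (rule sum.swap)
    also have "\<dots> = (\<Sum>j<m. \<Sum>r\<in>R. \<Sum>b\<in>S. F j r (a j) * (G j r (a(m:=b)) * h b))"
      by (intro sum.cong refl) (rule sum.swap)
    also have "\<dots> = (\<Sum>j<m. \<Sum>r\<in>R. F j r (a j) * (\<Sum>b\<in>S. G j r (a(m:=b)) * h b))"
      by (simp add: sum_distrib_left)
    finally show ?thesis .
  qed
  also have "(\<Sum>b\<in>S. (\<Sum>r\<in>R. F m r b * G m r a) * h b) = (\<Sum>r\<in>R. G m r a * (\<Sum>b\<in>S. F m r b * h b))"
  proof -
    have "(\<Sum>b\<in>S. (\<Sum>r\<in>R. F m r b * G m r a) * h b) = (\<Sum>b\<in>S. \<Sum>r\<in>R. G m r a * (F m r b * h b))"
      by (intro sum.cong refl) (subst sum_distrib_right, simp add: mult_ac)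
    also have "\<dots> = (\<Sum>r\<in>R. \<Sum>b\<in>S. G m r a * (F m r b * h b))" by (rule sum.swap)
    also have "\<dots> = (\<Sum>r\<in>R. G m r a * (\<Sum>b\<in>S. F m r b * h b))" by (simp add: sum_distrib_left)
    finally show ?thesis .
  qed
  also have "[(\<Sum>j<m. \<Sum>r\<in>R. F j r (a j) * (\<Sum>b\<in>S. G j r (a(m:=b)) * h b)) + \<dots>
      = (\<Sum>j<m. \<Sum>r\<in>R. F j r (a j) * (\<Sum>b\<in>S. G j r (a(m:=b)) * h b)) + (\<Sum>r\<in>R. G m r a * 0)] (mod int p)"
    using orth by (intro cong_add cong_sum cong_mult cong_refl) auto
  also have "(\<Sum>j<m. \<Sum>r\<in>R. F j r (a j) * (\<Sum>b\<in>S. G j r (a(m:=b)) * h b)) + (\<Sum>r\<in>R. G m r a * 0)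
     = (\<Sum>j<m. \<Sum>r\<in>R. F j r (a j) * (\<Sum>b\<in>S. G j r (a(m:=b)) * h b))" by simp
  finally show "[(\<Sum>b\<in>S. T (a(m:=b)) * h b) =
      (\<Sum>j<m. \<Sum>r\<in>R. F j r (a j) * (\<Sum>b\<in>S. G j r (a(m:=b)) * h b))] (mod int p)" .
qed

lemma contract_diag:
  assumes "diagc p (Suc m) S w T" "m \<ge> 1" "finite S"
  shows "diagc p m S (\<lambda>s. w s * h s) (\<lambda>a. \<Sum>b\<in>S. T (a(m:=b)) * h b)"
  unfolding diagc_def
proof (intro allI impI)
  fix a assume aS: "\<forall>j<m. a j \<in> S"
  have a0: "a 0 \<in> S" using aS assms(2) by auto
  define P where "P = (\<forall>j<m. a j = a 0)"
  have "[T (a(m:=b)) * h b = (if b = a 0 then (if P then w (a 0) * h b else 0) else 0)] (mod int p)"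
    if b: "b \<in> S" for b
  proof -
    have in1: "\<forall>j<Suc m. (a(m:=b)) j \<in> S"
    proof (intro allI impI)
      fix j assume j: "j < Suc m"
      show "(a(m:=b)) j \<in> S"
      proof (cases "j = m")
        case True thus ?thesis using b by simp
      next
        case False hence "j < m" using j by simp
        thus ?thesis using aS False by simp
      qed
    qed
    have e0: "(a(m:=b)) 0 = a 0" using assms(2) by simp
    have eq: "(\<forall>j<Suc m. (a(m:=b)) j = a 0) \<longleftrightarrow> P \<and> b = a 0"
    proof
      assume H: "\<forall>j<Suc m. (a(m:=b)) j = a 0"
      have "b = a 0" using H[rule_format, of m] by simp
      moreover have "P" unfolding P_def
      proof (intro allI impI)
        fix j assume j: "j < m"
        thus "a j = a 0" using H[rule_format, of j] by simp
      qed
      ultimately show "P \<and> b = a 0" by simp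
    next
      assume H: "P \<and> b = a 0"
      show "\<forall>j<Suc m. (a(m:=b)) j = a 0"
      proof (intro allI impI)
        fix j assume j: "j < Suc m"
        show "(a(m:=b)) j = a 0"
        proof (cases "j = m")
          case True have "b = a 0" using H by blast
          thus ?thesis using True by simp
        next
          case False hence "j < m" using j by simp
          hence "a j = a 0" using H unfolding P_def by blast
          thus ?thesis using False by simp
        qed
      qed
    qed
    have "[T (a(m:=b)) = (if \<forall>j<Suc m. (a(m:=b)) j = (a(m:=b)) 0 then w ((a(m:=b)) 0) else 0)] (mod int p)"
      using mp[OF spec[OF assms(1)[unfolded diagc_def], of "a(m:=b)"] in1] .
    hence "[T (a(m:=b)) = (if P \<and> b = a 0 then w (a 0) else 0)] (mod int p)"
      by (simp only: e0 eq)
    hence "[T (a(m:=b)) * h b = (if P \<and> b = a 0 then w (a 0) else 0) * h b] (mod int p)"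
      by (intro cong_mult cong_refl)
    moreover have "(if P \<and> b = a 0 then w (a 0) else 0) * h b
        = (if b = a 0 then (if P then w (a 0) * h b else 0) else 0)" by simp
    ultimately show ?thesis by simp
  qed
  hence "[(\<Sum>b\<in>S. T (a(m:=b)) * h b) = (\<Sum>b\<in>S. (if b = a 0 then (if P then w (a 0) * h b else 0) else 0))] (mod int p)"
    by (intro cong_sum) auto
  also have "(\<Sum>b\<in>S. (if b = a 0 then (if P then w (a 0) * h b else 0) else 0)) = (if P then w (a 0) * h (a 0) else 0)"
    by (subst sum.delta[OF assms(3)]) (simp add: a0)
  finally show "[(\<Sum>b\<in>S. T (a(m:=b)) * h b) = (if \<forall>j<m. a j = a 0 then w (a 0) * h (a 0) else 0)] (mod int p)"
    unfolding P_def .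
qed



lemma diagc_mono:
  assumes "S' \<subseteq> S" "diagc p m S w T"
  shows "diagc p m S' w T"
  unfolding diagc_def
proof (intro allI impI)
  fix a assume "\<forall>j<m. a j \<in> S'"
  hence "\<forall>j<m. a j \<in> S" using assms(1) by blast
  thus "[T a = (if \<forall>j<m. a j = a 0 then w (a 0) else 0)] (mod int p)"
    using mp[OF spec[OF assms(2)[unfolded diagc_def], of a]] by blast
qed

lemma slice_base:
  assumes "prime p" "finite S" "finite R" "\<forall>s\<in>S. \<not> int p dvd w s"
    and "diagc p (Suc (Suc 0)) S w T" "decomp p (Suc (Suc 0)) R F G T" "indep (Suc (Suc 0)) G"
  shows "card S \<le> Suc (Suc 0) * card R"
proof -
  have p0: "p > 0" "p > 1" using prime_gt_1_nat[OF assms(1)] by auto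
  let ?W = "Wsp p S R (F (Suc 0))"
  define Th where "Th h = (\<lambda>a. \<Sum>b\<in>S. T (a(Suc 0:=b)) * h b)" for h :: "'a \<Rightarrow> int"
  define Gh where "Gh h = (\<lambda>j r a. \<Sum>b\<in>S. G j r (a(Suc 0:=b)) * h b)" for h :: "'a \<Rightarrow> int"
  define z where "z = (\<lambda>_::nat. undefined :: 'a)"
  define lam where "lam h = restrict (\<lambda>r. Gh h 0 r z mod int p) R" for h
  have key: "[w s * h s = (\<Sum>r\<in>R. F 0 r s * Gh h 0 r z)] (mod int p)" if h: "h \<in> ?W" and s: "s \<in> S" for h s
  proof -
    have orth: "\<forall>r\<in>R. [(\<Sum>b\<in>S. F (Suc 0) r b * h b) = 0] (mod int p)" using h by (simp add: Wsp_def)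
    have dec: "decomp p (Suc 0) R F (Gh h) (Th h)"
      unfolding Gh_def Th_def by (rule contract_decomp[OF assms(6) assms(7) orth])
    have ind: "indep (Suc 0) (Gh h)" unfolding Gh_def by (rule contract_indep[OF assms(7)])
    have dg: "diagc p (Suc 0) S (\<lambda>s. w s * h s) (Th h)"
      unfolding Th_def by (rule contract_diag[OF assms(5)]) (use assms(2) in auto)
    define as where "as = z(0:=s)"
    have as0: "as 0 = s" by (simp add: as_def)
    have "[Th h as = (if \<forall>j<Suc 0. as j = as 0 then w (as 0) * h (as 0) else 0)] (mod int p)"
      using mp[OF spec[OF dg[unfolded diagc_def], of as]] s as0 by auto
    hence c1: "[Th h as = w s * h s] (mod int p)" using as0 by simp
    have "[Th h as = (\<Sum>j<Suc 0. \<Sum>r\<in>R. F j r (as j) * Gh h j r as)] (mod int p)"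
      using dec by (simp add: decomp_def)
    hence c2: "[Th h as = (\<Sum>r\<in>R. F 0 r s * Gh h 0 r as)] (mod int p)" using as0 by simp
    have "Gh h 0 r as = Gh h 0 r z" for r
      using ind unfolding indep_def as_def by blast
    hence c3: "[Th h as = (\<Sum>r\<in>R. F 0 r s * Gh h 0 r z)] (mod int p)" using c2 by simp
    show ?thesis using c1 c3 by (metis cong_sym cong_trans)
  qed
  have inj: "inj_on lam ?W"
  proof (rule inj_onI)
    fix h1 h2 assume h: "h1 \<in> ?W" "h2 \<in> ?W" "lam h1 = lam h2"
    show "h1 = h2"
    proof
      fix s
      show "h1 s = h2 s"
      proof (cases "s \<in> S")
        case False thus ?thesis using h(1,2) by (simp add: Wsp_def NF_def)
      next
        case True
        have "[Gh h1 0 r z = Gh h2 0 r z] (mod int p)" if r: "r \<in> R" for r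
          using fun_cong[OF h(3), of r] r by (simp add: lam_def cong_def)
        hence "[(\<Sum>r\<in>R. F 0 r s * Gh h1 0 r z) = (\<Sum>r\<in>R. F 0 r s * Gh h2 0 r z)] (mod int p)"
          by (intro cong_sum cong_mult cong_refl) auto
        hence "[w s * h1 s = w s * h2 s] (mod int p)"
          using key[OF h(1) True] key[OF h(2) True] by (metis cong_sym cong_trans)
        hence "int p dvd w s * (h1 s - h2 s)" by (simp add: cong_iff_dvd_diff right_diff_distrib)
        hence "int p dvd (h1 s - h2 s)"
          using assms(1,4) True by (simp add: prime_dvd_mult_iff)
        moreover have "0 \<le> h1 s" "h1 s < int p" "0 \<le> h2 s" "h2 s < int p"
          using h(1,2) by (auto simp: Wsp_def NF_def)
        ultimately show ?thesis using mod_unique_int by blast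
      qed
    qed
  qed
  have sub: "lam ` ?W \<subseteq> R \<rightarrow>\<^sub>E {0..<int p}"
  proof
    fix x assume "x \<in> lam ` ?W"
    then obtain h where xh: "x = lam h" by blast
    have "lam h \<in> R \<rightarrow>\<^sub>E {0..<int p}" unfolding lam_def
      by (rule restrict_PiE_iff[THEN iffD2]) (use p0 in auto)
    thus "x \<in> R \<rightarrow>\<^sub>E {0..<int p}" using xh by simp
  qed
  have "card ?W \<le> card (R \<rightarrow>\<^sub>E {0..<int p})"
    by (rule card_inj_on_le[OF inj sub]) (simp add: finite_PiE assms(3))
  hence cW: "card ?W \<le> p ^ card R" using assms(3) by (simp add: card_PiE)
  have "p ^ card S \<le> p ^ card R * card ?W" by (rule W_count[OF assms(2,3) p0(1)])
  also have "\<dots> \<le> p ^ card R * p ^ card R" using cW by simp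
  also have "\<dots> = p ^ (Suc (Suc 0) * card R)" by (simp flip: power_add)
  finally show ?thesis using power_le_imp_le_exp[OF p0(2)] by blast
qed

lemma slice_step:
  fixes S :: "'x set" and R :: "'r set" and w :: "'x \<Rightarrow> int" and T :: "(nat \<Rightarrow> 'x) \<Rightarrow> int"
    and F :: "nat \<Rightarrow> 'r \<Rightarrow> 'x \<Rightarrow> int" and G :: "nat \<Rightarrow> 'r \<Rightarrow> (nat \<Rightarrow> 'x) \<Rightarrow> int"
  assumes IH: "\<And>(S :: 'x set) (w :: 'x \<Rightarrow> int) (T :: (nat \<Rightarrow> 'x) \<Rightarrow> int) (F :: nat \<Rightarrow> 'r \<Rightarrow> 'x \<Rightarrow> int) (G :: nat \<Rightarrow> 'r \<Rightarrow> (nat \<Rightarrow> 'x) \<Rightarrow> int). finite S \<Longrightarrow> (\<forall>s\<in>S. \<not> int p dvd w s) \<Longrightarrow> diagc p m S w T \<Longrightarrow>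
      decomp p m R F G T \<Longrightarrow> indep m G \<Longrightarrow> card S \<le> m * card R"
    and "m \<ge> 1" "prime p" "finite S" "finite R" "\<forall>s\<in>S. \<not> int p dvd w s"
    and "diagc p (Suc m) S w T" "decomp p (Suc m) R F G T" "indep (Suc m) G"
  shows "card S \<le> Suc m * card R"
proof -
  have p0: "p > 0" using prime_gt_1_nat[OF assms(3)] by auto
  obtain h where h: "h \<in> Wsp p S R (F m)" "card S \<le> card {b\<in>S. h b \<noteq> 0} + card R"
    using support_lemma[OF assms(4,5,3)] by blast
  define S' where "S' = {b\<in>S. h b \<noteq> 0}"
  have orth: "\<forall>r\<in>R. [(\<Sum>b\<in>S. F m r b * h b) = 0] (mod int p)" using h(1) by (simp add: Wsp_def)
  have dec: "decomp p m R F (\<lambda>j r a. \<Sum>b\<in>S. G j r (a(m:=b)) * h b) (\<lambda>a. \<Sum>b\<in>S. T (a(m:=b)) * h b)"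
    by (rule contract_decomp[OF assms(8) assms(9) orth])
  have ind: "indep m (\<lambda>j r a. \<Sum>b\<in>S. G j r (a(m:=b)) * h b)" by (rule contract_indep[OF assms(9)])
  have dg: "diagc p m S (\<lambda>s. w s * h s) (\<lambda>a. \<Sum>b\<in>S. T (a(m:=b)) * h b)"
    by (rule contract_diag[OF assms(7) assms(2) assms(4)])
  have dg': "diagc p m S' (\<lambda>s. w s * h s) (\<lambda>a. \<Sum>b\<in>S. T (a(m:=b)) * h b)"
    by (rule diagc_mono[OF _ dg]) (auto simp: S'_def)
  have nz: "\<forall>s\<in>S'. \<not> int p dvd w s * h s"
  proof
    fix s assume s: "s \<in> S'"
    have "0 \<le> h s" "h s < int p" using h(1) by (auto simp: Wsp_def NF_def)
    hence "\<not> int p dvd h s" using s by (auto simp: S'_def dest: zdvd_imp_le)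
    moreover have "\<not> int p dvd w s" using assms(6) s by (auto simp: S'_def)
    ultimately show "\<not> int p dvd w s * h s" using assms(3) by (simp add: prime_dvd_mult_iff)
  qed
  have "card S' \<le> m * card R"
    by (rule IH[OF _ nz dg' dec ind]) (use assms(4) in \<open>simp add: S'_def\<close>)
  thus ?thesis using h(2) unfolding S'_def by simp
qed

lemma slice_rank:
  assumes "prime p" "finite S" "finite R" "\<forall>s\<in>S. \<not> int p dvd w s"
    and "diagc p (Suc (Suc k)) S w T" "decomp p (Suc (Suc k)) R F G T" "indep (Suc (Suc k)) G"
  shows "card S \<le> Suc (Suc k) * card R"
  using assms(2,4-7)
proof (induction k arbitrary: S w T F G)
  case 0
  then show ?case using slice_base[OF assms(1) _ assms(3)] by blast
next
  case (Suc k)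
  show ?case
    by (rule slice_step[OF _ _ assms(1) Suc.prems(1) assms(3) Suc.prems(2-5)])
       (use Suc.IH in auto)
qed



definition mnm :: "(nat \<times> nat) set \<Rightarrow> (nat \<Rightarrow> nat \<Rightarrow> nat) \<Rightarrow> int" where
  "mnm U a = (\<Prod>x\<in>U. int (a (fst x) (snd x)))"

definition bin :: "nat \<Rightarrow> nat \<Rightarrow> (nat \<Rightarrow> nat \<Rightarrow> nat) \<Rightarrow> bool" where
  "bin p n a \<longleftrightarrow> (\<forall>j<p. \<forall>i<n. a j i \<le> 1)"

inductive lowdeg :: "nat \<Rightarrow> nat \<Rightarrow> nat \<Rightarrow> ((nat \<Rightarrow> nat \<Rightarrow> nat) \<Rightarrow> int) \<Rightarrow> bool" for p n D where
  lmono: "U \<subseteq> {..<p} \<times> {..<n} \<Longrightarrow> card U \<le> D \<Longrightarrow> lowdeg p n D (\<lambda>a. c * mnm U a)"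
| lzero: "lowdeg p n D (\<lambda>a. 0)"
| ladd: "lowdeg p n D f \<Longrightarrow> lowdeg p n D g \<Longrightarrow> lowdeg p n D (\<lambda>a. f a + g a)"

definition LD :: "nat \<Rightarrow> nat \<Rightarrow> nat \<Rightarrow> ((nat \<Rightarrow> nat \<Rightarrow> nat) \<Rightarrow> int) \<Rightarrow> bool" where
  "LD p n D f \<longleftrightarrow> (\<exists>g. lowdeg p n D g \<and> (\<forall>a. bin p n a \<longrightarrow> f a = g a))"

lemma mnm_bin:
  assumes "U \<subseteq> {..<p} \<times> {..<n}" "bin p n a"
  shows "mnm U a = (if \<forall>x\<in>U. a (fst x) (snd x) = 1 then 1 else 0)"
proof -
  have fin: "finite U" using assms(1) finite_subset by blast
  show ?thesis
  proof (cases "\<forall>x\<in>U. a (fst x) (snd x) = 1")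
    case True
    hence "mnm U a = (\<Prod>x\<in>U. 1)" unfolding mnm_def by (intro prod.cong) auto
    thus ?thesis using True by simp
  next
    case False
    then obtain x where x: "x \<in> U" "a (fst x) (snd x) \<noteq> 1" by blast
    have "a (fst x) (snd x) \<le> 1" using assms x(1) unfolding bin_def by auto
    hence "a (fst x) (snd x) = 0" using x(2) by simp
    hence "mnm U a = 0" unfolding mnm_def using fin x(1) by (intro prod_zero) auto
    thus ?thesis using False by simp
  qed
qed

lemma mnm_union:
  assumes "U1 \<subseteq> {..<p} \<times> {..<n}" "U2 \<subseteq> {..<p} \<times> {..<n}" "bin p n a"
  shows "mnm U1 a * mnm U2 a = mnm (U1 \<union> U2) a"
proof -
  have "U1 \<union> U2 \<subseteq> {..<p} \<times> {..<n}" using assms by blast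
  thus ?thesis using mnm_bin[OF assms(1,3)] mnm_bin[OF assms(2,3)] mnm_bin[of "U1 \<union> U2" p n a] assms(3)
    by auto
qed

lemma lowdeg_deg_mono: "lowdeg p n D f \<Longrightarrow> D \<le> D' \<Longrightarrow> lowdeg p n D' f"
  by (induction rule: lowdeg.induct) (auto intro: lowdeg.intros)

lemma lowdeg_scale: "lowdeg p n D f \<Longrightarrow> lowdeg p n D (\<lambda>a. c * f a)"
proof (induction rule: lowdeg.induct)
  case (lmono U c')
  have "lowdeg p n D (\<lambda>a. (c * c') * mnm U a)" by (rule lowdeg.lmono[OF lmono])
  thus ?case by (simp add: mult.assoc)
next
  case lzero thus ?case using lowdeg.lzero by simp
next
  case (ladd f g)
  have "lowdeg p n D (\<lambda>a. c * f a + c * g a)" by (rule lowdeg.ladd[OF ladd.IH])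
  thus ?case by (simp add: distrib_left)
qed

lemma LD_cong:
  assumes "LD p n D f" "\<And>a. bin p n a \<Longrightarrow> f a = g a"
  shows "LD p n D g"
proof -
  obtain f' where f': "lowdeg p n D f'" "\<forall>a. bin p n a \<longrightarrow> f a = f' a"
    using assms(1) unfolding LD_def by blast
  show ?thesis unfolding LD_def using f' assms(2) by (intro exI[of _ f'] conjI) auto
qed

lemma LD_of_lowdeg: "lowdeg p n D f \<Longrightarrow> LD p n D f"
  unfolding LD_def by blast

lemma LD_zero: "LD p n D (\<lambda>a. 0)"
  by (rule LD_of_lowdeg, rule lowdeg.lzero)

lemma LD_mnm: "U \<subseteq> {..<p} \<times> {..<n} \<Longrightarrow> card U \<le> D \<Longrightarrow> LD p n D (\<lambda>a. c * mnm U a)"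
  by (rule LD_of_lowdeg, rule lowdeg.lmono)

lemma LD_const: "LD p n D (\<lambda>a. c)"
proof -
  have "LD p n D (\<lambda>a. c * mnm {} a)" by (rule LD_mnm) auto
  thus ?thesis by (simp add: mnm_def)
qed

lemma LD_add:
  assumes "LD p n D f" "LD p n D g"
  shows "LD p n D (\<lambda>a. f a + g a)"
proof -
  obtain f' where f': "lowdeg p n D f'" "\<forall>a. bin p n a \<longrightarrow> f a = f' a"
    using assms(1) unfolding LD_def by blast
  obtain g' where g': "lowdeg p n D g'" "\<forall>a. bin p n a \<longrightarrow> g a = g' a"
    using assms(2) unfolding LD_def by blast
  show ?thesis unfolding LD_def using f' g'
    by (intro exI[of _ "\<lambda>a. f' a + g' a"] conjI lowdeg.ladd) auto
qed

lemma LD_scale: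
  assumes "LD p n D f"
  shows "LD p n D (\<lambda>a. c * f a)"
proof -
  obtain f' where f': "lowdeg p n D f'" "\<forall>a. bin p n a \<longrightarrow> f a = f' a"
    using assms(1) unfolding LD_def by blast
  show ?thesis unfolding LD_def using f'
    by (intro exI[of _ "\<lambda>a. c * f' a"] conjI lowdeg_scale) auto
qed

lemma LD_deg_mono:
  assumes "LD p n D f" "D \<le> D'"
  shows "LD p n D' f"
proof -
  obtain f' where f': "lowdeg p n D f'" "\<forall>a. bin p n a \<longrightarrow> f a = f' a"
    using assms(1) unfolding LD_def by blast
  show ?thesis unfolding LD_def using f' assms(2)
    by (intro exI[of _ f'] conjI) (auto intro: lowdeg_deg_mono)
qed

lemma lowdeg_mult_LD:
  assumes "lowdeg p n D1 f" "lowdeg p n D2 g"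
  shows "LD p n (D1 + D2) (\<lambda>a. f a * g a)"
  using assms(1)
proof (induction rule: lowdeg.induct)
  case (lmono U c)
  show ?case using assms(2)
  proof (induction rule: lowdeg.induct)
    case (lmono U' c')
    have "LD p n (D1 + D2) (\<lambda>a. (c * c') * mnm (U \<union> U') a)"
    proof (rule LD_mnm)
      show "U \<union> U' \<subseteq> {..<p} \<times> {..<n}" using lmono \<open>U \<subseteq> {..<p} \<times> {..<n}\<close> by blast
      have "card (U \<union> U') \<le> card U + card U'" by (rule card_Un_le)
      thus "card (U \<union> U') \<le> D1 + D2" using lmono \<open>card U \<le> D1\<close> by simp
    qed
    thus ?case
    proof (rule LD_cong)
      fix a assume "bin p n a"
      hence "mnm U a * mnm U' a = mnm (U \<union> U') a"
        using mnm_union \<open>U \<subseteq> {..<p} \<times> {..<n}\<close> lmono(1) by blast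
      thus "c * c' * mnm (U \<union> U') a = c * mnm U a * (c' * mnm U' a)"
        by (simp add: mult_ac)
    qed
  next
    case lzero thus ?case using LD_zero by simp
  next
    case (ladd g1 g2)
    have "LD p n (D1 + D2) (\<lambda>a. c * mnm U a * g1 a + c * mnm U a * g2 a)"
      by (rule LD_add[OF ladd.IH])
    thus ?case by (simp add: distrib_left)
  qed
next
  case lzero thus ?case using LD_zero by simp
next
  case (ladd f1 f2)
  have "LD p n (D1 + D2) (\<lambda>a. f1 a * g a + f2 a * g a)"
    by (rule LD_add[OF ladd.IH])
  thus ?case by (simp add: distrib_right)
qed

lemma LD_mult: "LD p n D1 f \<Longrightarrow> LD p n D2 g \<Longrightarrow> LD p n (D1 + D2) (\<lambda>a. f a * g a)"
proof -
  assume "LD p n D1 f" "LD p n D2 g"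
  then obtain f' g' where f': "lowdeg p n D1 f'" "\<forall>a. bin p n a \<longrightarrow> f a = f' a"
    and g': "lowdeg p n D2 g'" "\<forall>a. bin p n a \<longrightarrow> g a = g' a" unfolding LD_def by blast
  show ?thesis using lowdeg_mult_LD[OF f'(1) g'(1)] by (rule LD_cong) (simp add: f'(2) g'(2))
qed

lemma LD_sum: "finite I \<Longrightarrow> (\<And>i. i \<in> I \<Longrightarrow> LD p n D (f i)) \<Longrightarrow> LD p n D (\<lambda>a. \<Sum>i\<in>I. f i a)"
proof (induction I rule: finite_induct)
  case empty thus ?case using LD_zero by simp
next
  case (insert x F)
  have "LD p n D (\<lambda>a. f x a + (\<Sum>i\<in>F. f i a))"
    by (rule LD_add) (use insert in auto)
  thus ?case using insert by simp
qed

lemma LD_prod: "finite I \<Longrightarrow> (\<And>i. i \<in> I \<Longrightarrow> LD p n (Dd i) (f i)) \<Longrightarrow>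
    LD p n (\<Sum>i\<in>I. Dd i) (\<lambda>a. \<Prod>i\<in>I. f i a)"
proof (induction I rule: finite_induct)
  case empty thus ?case using LD_const by simp
next
  case (insert x F)
  have "LD p n (Dd x + (\<Sum>i\<in>F. Dd i)) (\<lambda>a. f x a * (\<Prod>i\<in>F. f i a))"
    by (rule LD_mult) (use insert in auto)
  thus ?case using insert by simp
qed

lemma LD_pow: "LD p n D f \<Longrightarrow> LD p n (k * D) (\<lambda>a. f a ^ k)"
proof (induction k)
  case 0 thus ?case using LD_const by simp
next
  case (Suc k)
  have "LD p n (D + k * D) (\<lambda>a. f a * f a ^ k)" by (rule LD_mult[OF Suc.prems Suc.IH[OF Suc.prems]])
  thus ?case by simp
qed

lemma LD_var: "j < p \<Longrightarrow> i < n \<Longrightarrow> LD p n 1 (\<lambda>a. int (a j i))"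
proof -
  assume "j < p" "i < n"
  hence "LD p n 1 (\<lambda>a. 1 * mnm {(j, i)} a)" by (intro LD_mnm) auto
  thus ?thesis by (simp add: mnm_def)
qed

definition Qs :: "nat \<Rightarrow> nat \<Rightarrow> nat set set" where
  "Qs n k = {S. S \<subseteq> {..<n} \<and> card S \<le> k}"

definition FF :: "nat set \<Rightarrow> (nat \<Rightarrow> nat) \<Rightarrow> int" where
  "FF S x = (\<Prod>i\<in>S. int (x i))"

lemma finite_Qs: "finite (Qs n k)"
  by (rule finite_subset[of _ "Pow {..<n}"]) (auto simp: Qs_def)

lemma lowdeg_slice:
  assumes "lowdeg p n D g" "D < p * Suc k"
  shows "\<exists>G. (\<forall>j S a b. G j S (a(j:=b)) = G j S a) \<and>
             (\<forall>a. g a = (\<Sum>j<p. \<Sum>S\<in>Qs n k. FF S (a j) * G j S a))"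
  using assms(1)
proof (induction rule: lowdeg.induct)
  case (lmono U c)
  define row where "row j = {i. (j, i) \<in> U}" for j
  have Usig: "U = Sigma {..<p} row" using lmono(1) by (auto simp: row_def)
  have finrow: "finite (row j)" for j
    by (rule finite_subset[of _ "{..<n}"]) (use lmono(1) in \<open>auto simp: row_def\<close>)
  have "\<exists>j<p. card (row j) \<le> k"
  proof (rule ccontr)
    assume "\<not> ?thesis"
    hence big: "\<forall>j<p. Suc k \<le> card (row j)" by auto
    have "p * Suc k = (\<Sum>j<p. Suc k)" by simp
    also have "\<dots> \<le> (\<Sum>j<p. card (row j))" using big by (intro sum_mono) auto
    also have "\<dots> = card U" unfolding Usig using finrow by (simp add: card_SigmaI)
    finally show False using lmono(2) assms(2) by simp
  qed
  then obtain j where j: "j < p" "card (row j) \<le> k" by blast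
  define V where "V = U - {j} \<times> UNIV"
  define G where "G j' S a = (if j' = j \<and> S = row j then c * mnm V a else 0)" for j' S a
  have indV: "mnm V (a(j:=b)) = mnm V a" for a b
    unfolding mnm_def by (intro prod.cong) (auto simp: V_def)
  have ind: "\<forall>j' S a b. G j' S (a(j':=b)) = G j' S a"
    by (auto simp: G_def indV)
  have rowQ: "row j \<in> Qs n k" using j lmono(1) by (auto simp: Qs_def row_def)
  have split: "mnm U a = FF (row j) (a j) * mnm V a" for a
  proof -
    have finU: "finite U" using lmono(1) finite_subset by blast
    have "mnm U a = (\<Prod>x\<in>U \<inter> {j} \<times> UNIV. int (a (fst x) (snd x))) * mnm V a"
      unfolding mnm_def V_def using finU by (rule prod.Int_Diff)
    also have "U \<inter> {j} \<times> UNIV = (\<lambda>i. (j, i)) ` row j" by (auto simp: row_def)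
    also have "(\<Prod>x\<in>(\<lambda>i. (j, i)) ` row j. int (a (fst x) (snd x))) = FF (row j) (a j)"
      unfolding FF_def by (subst prod.reindex) (auto simp: inj_on_def)
    finally show ?thesis .
  qed
  have "c * mnm U a = (\<Sum>j'<p. \<Sum>S\<in>Qs n k. FF S (a j') * G j' S a)" for a
  proof -
    have inner: "(\<Sum>S\<in>Qs n k. FF S (a j') * G j' S a) = (if j' = j then FF (row j) (a j) * (c * mnm V a) else 0)" for j'
    proof (cases "j' = j")
      case True
      have "(\<Sum>S\<in>Qs n k. FF S (a j') * G j' S a) = (\<Sum>S\<in>Qs n k. if S = row j then FF S (a j) * (c * mnm V a) else 0)"
        using True by (intro sum.cong) (auto simp: G_def)
      also have "\<dots> = FF (row j) (a j) * (c * mnm V a)"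
        using finite_Qs rowQ by (simp add: sum.delta)
      finally show ?thesis using True by simp
    next
      case False thus ?thesis by (simp add: G_def)
    qed
    have "(\<Sum>j'<p. \<Sum>S\<in>Qs n k. FF S (a j') * G j' S a) = (\<Sum>j'<p. if j' = j then FF (row j) (a j) * (c * mnm V a) else 0)"
      by (simp only: inner)
    also have "\<dots> = FF (row j) (a j) * (c * mnm V a)" using j(1) by (simp add: sum.delta)
    also have "\<dots> = c * mnm U a" by (simp add: split mult_ac)
    finally show ?thesis by simp
  qed
  thus ?case using ind by blast
next
  case lzero
  show ?case by (rule exI[of _ "\<lambda>j S a. 0"]) simp
next
  case (ladd f g)
  obtain G1 where G1: "\<forall>j S a b. G1 j S (a(j:=b)) = G1 j S a" "\<forall>a. f a = (\<Sum>j<p. \<Sum>S\<in>Qs n k. FF S (a j) * G1 j S a)"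
    using ladd.IH(1) by blast
  obtain G2 where G2: "\<forall>j S a b. G2 j S (a(j:=b)) = G2 j S a" "\<forall>a. g a = (\<Sum>j<p. \<Sum>S\<in>Qs n k. FF S (a j) * G2 j S a)"
    using ladd.IH(2) by blast
  show ?case
  proof (rule exI[of _ "\<lambda>j S a. G1 j S a + G2 j S a"], intro conjI allI)
    fix j S a b show "G1 j S (a(j:=b)) + G2 j S (a(j:=b)) = G1 j S a + G2 j S a" using G1(1) G2(1) by simp
  next
    fix a show "f a + g a = (\<Sum>j<p. \<Sum>S\<in>Qs n k. FF S (a j) * (G1 j S a + G2 j S a))"
      using G1(2) G2(2) by (simp add: distrib_left sum.distrib)
  qed
qed



definition Box :: "nat \<Rightarrow> nat \<Rightarrow> (nat \<Rightarrow> nat) set" where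
  "Box n N = {e. (\<forall>i<n. e i \<le> N) \<and> (\<forall>i\<ge>n. e i = 0)}"

lemma box_bij: "bij_betw (\<lambda>g i. if i < n then g i else 0) ({..<n} \<rightarrow>\<^sub>E {..N}) (Box n N)"
proof (rule bij_betw_byWitness[where f' = "\<lambda>e. restrict e {..<n}"])
  show "\<forall>g\<in>{..<n} \<rightarrow>\<^sub>E {..N}. restrict (\<lambda>i. if i < n then g i else 0) {..<n} = g"
    by (auto simp: fun_eq_iff PiE_def extensional_def)
  show "\<forall>e\<in>Box n N. (\<lambda>i. if i < n then restrict e {..<n} i else 0) = e"
    by (auto simp: fun_eq_iff Box_def)
  show "(\<lambda>g i. if i < n then g i else 0) ` ({..<n} \<rightarrow>\<^sub>E {..N}) \<subseteq> Box n N"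
    by (auto simp: Box_def PiE_def Pi_def)
  show "(\<lambda>e. restrict e {..<n}) ` Box n N \<subseteq> {..<n} \<rightarrow>\<^sub>E {..N}"
  proof
    fix y assume "y \<in> (\<lambda>e. restrict e {..<n}) ` Box n N"
    then obtain e where e: "e \<in> Box n N" "y = restrict e {..<n}" by blast
    have "restrict e {..<n} \<in> {..<n} \<rightarrow>\<^sub>E {..N}"
      by (rule restrict_PiE_iff[THEN iffD2]) (use e(1) in \<open>auto simp: Box_def\<close>)
    thus "y \<in> {..<n} \<rightarrow>\<^sub>E {..N}" using e(2) by simp
  qed
qed

lemma finite_Box: "finite (Box n N)"
  using bij_betw_finite[OF box_bij] by (simp add: finite_PiE)

lemma prod_sum_box:
  fixes g :: "nat \<Rightarrow> nat \<Rightarrow> 'a::comm_semiring_1"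
  shows "(\<Sum>e\<in>Box n N. \<Prod>i<n. g i (e i)) = (\<Prod>i<n. \<Sum>k\<le>N. g i k)"
proof -
  have "(\<Prod>i<n. \<Sum>k\<le>N. g i k) = (\<Sum>h\<in>{..<n} \<rightarrow>\<^sub>E {..N}. \<Prod>i<n. g i (h i))"
    by (rule prod_sum_PiE) auto
  also have "\<dots> = (\<Sum>h\<in>{..<n} \<rightarrow>\<^sub>E {..N}. \<Prod>i<n. g i ((\<lambda>i. if i < n then h i else 0) i))"
    by (intro sum.cong refl prod.cong) auto
  also have "\<dots> = (\<Sum>e\<in>Box n N. \<Prod>i<n. g i (e i))"
    by (rule sum.reindex_bij_betw[OF box_bij])
  finally show ?thesis by simp
qed

lemma Fpn_sub: "Fpn p n \<subseteq> Box n p"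
  by (auto simp: Fpn_def Box_def less_imp_le)

lemma cube_sub: "cube n \<subseteq> Box n 1"
  by (auto simp: cube_def Box_def)

lemma mon_sub: "monomials k p n \<subseteq> Box n (p - 1)"
  by (auto simp: monomials_def Box_def)

lemma mon_full: "monomials (n * (p - 1)) p n = Box n (p - 1)"
proof
  show "monomials (n * (p - 1)) p n \<subseteq> Box n (p - 1)" by (rule mon_sub)
  show "Box n (p - 1) \<subseteq> monomials (n * (p - 1)) p n"
  proof
    fix e assume e: "e \<in> Box n (p - 1)"
    have "(\<Sum>i<n. e i) \<le> (\<Sum>i<n. p - 1)" using e by (intro sum_mono) (auto simp: Box_def)
    thus "e \<in> monomials (n * (p - 1)) p n" using e by (auto simp: monomials_def Box_def)
  qed
qed

definition coefL :: "nat \<Rightarrow> nat \<Rightarrow> nat \<Rightarrow> nat" where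
  "coefL p t k = (if k = 0 then 1 else 0) + (p - 1) * ((p - 1) choose k) * (p - t) ^ (p - 1 - k)"

lemma L_eval:
  assumes "prime p" "t < p" "y < p"
  shows "(\<Sum>k\<le>p-1. coefL p t k * y ^ k) mod p = (if y = t then 1 else 0)"
proof -
  have p1: "p > 1" using prime_gt_1_nat[OF assms(1)] .
  have pk: "coefL p t k * y ^ k = (if k = 0 then y ^ k else 0) + (p - 1) * (((p - 1) choose k) * y ^ k * (p - t) ^ (p - 1 - k))" for k
    unfolding coefL_def by (simp add: distrib_right mult_ac)
  have "(\<Sum>k\<le>p-1. coefL p t k * y ^ k) = (\<Sum>k\<le>p-1. (if k = 0 then y ^ k else 0) + (p - 1) * (((p - 1) choose k) * y ^ k * (p - t) ^ (p - 1 - k)))"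
    by (simp only: pk)
  also have "\<dots> = (\<Sum>k\<le>p-1. (if k = 0 then y ^ k else 0)) + (p - 1) * (\<Sum>k\<le>p-1. ((p - 1) choose k) * y ^ k * (p - t) ^ (p - 1 - k))"
    by (simp only: sum.distrib sum_distrib_left)
  also have "(\<Sum>k\<le>p-1. (if k = 0 then y ^ k else 0)) = 1" by (simp add: sum.delta)
  also have "(\<Sum>k\<le>p-1. ((p - 1) choose k) * y ^ k * (p - t) ^ (p - 1 - k)) = (y + (p - t)) ^ (p - 1)"
    using binomial_ring[of y "p - t" "p - 1"] by simp
  finally have eq: "(\<Sum>k\<le>p-1. coefL p t k * y ^ k) = 1 + (p - 1) * (y + (p - t)) ^ (p - 1)" .
  show ?thesis
  proof (cases "y = t")
    case True
    have yp: "y + (p - t) = p" using True assms by simp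
    have "p dvd p ^ (p - 1)" using p1 by (simp add: dvd_power)
    hence "[(y + (p - t)) ^ (p - 1) = 0] (mod p)" unfolding yp by (simp add: cong_0_iff)
    hence "[1 + (p - 1) * (y + (p - t)) ^ (p - 1) = 1 + (p - 1) * 0] (mod p)"
      by (intro cong_add cong_mult cong_refl)
    hence "(1 + (p - 1) * (y + (p - t)) ^ (p - 1)) mod p = 1 mod p" by (simp add: cong_def)
    thus ?thesis using eq True p1 by simp
  next
    case False
    have "\<not> p dvd (y + (p - t))"
    proof
      assume "p dvd (y + (p - t))"
      then obtain q where q: "y + (p - t) = p * q" by (elim dvdE)
      have "q \<noteq> 0"
      proof
        assume "q = 0"
        hence "y + (p - t) = 0" using q by simp
        thus False using assms(2) by simp
      qed
      moreover have "y + (p - t) < p * 2" using assms(2,3) by simp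
      hence "p * q < p * 2" using q by simp
      hence "q < 2" by simp
      ultimately have "q = 1" by simp
      thus False using q False assms by simp
    qed
    hence "[(y + (p - t)) ^ (p - 1) = 1] (mod p)" by (rule fermat_theorem[OF assms(1)])
    hence "[1 + (p - 1) * (y + (p - t)) ^ (p - 1) = 1 + (p - 1) * 1] (mod p)"
      by (intro cong_add cong_mult cong_refl)
    moreover have "1 + (p - 1) * 1 = p" using p1 by simp
    ultimately have "(1 + (p - 1) * (y + (p - t)) ^ (p - 1)) mod p = 0" by (simp add: cong_def)
    thus ?thesis using eq False by simp
  qed
qed

lemma ind_eval:
  assumes "prime p" "x \<in> Fpn p n" "b \<in> Fpn p n"
  shows "(\<Prod>i<n. \<Sum>k\<le>p-1. coefL p (b i) k * x i ^ k) mod p = (if x = b then 1 else 0)"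
proof -
  have p1: "p > 1" using prime_gt_1_nat[OF assms(1)] .
  have "[(\<Prod>i<n. \<Sum>k\<le>p-1. coefL p (b i) k * x i ^ k) = (\<Prod>i<n. (if x i = b i then 1 else 0))] (mod p)"
  proof (intro cong_prod)
    fix i assume "i \<in> {..<n}"
    hence "b i < p" "x i < p" using assms(2,3) by (auto simp: Fpn_def)
    thus "[(\<Sum>k\<le>p-1. coefL p (b i) k * x i ^ k) = (if x i = b i then 1 else 0)] (mod p)"
      using L_eval[OF assms(1)] p1 by (simp add: cong_def)
  qed
  also have "(\<Prod>i<n. (if x i = b i then 1 else 0)) = (if \<forall>i<n. x i = b i then 1 else (0::nat))"
    by (induction n) (auto simp: less_Suc_eq)
  also have "(\<forall>i<n. x i = b i) \<longleftrightarrow> x = b"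
    using assms(2,3) by (auto simp: Fpn_def fun_eq_iff) (metis not_le)
  finally show ?thesis using p1 by (simp add: cong_def)
qed

lemma interp_exists:
  assumes "prime p" "B \<subseteq> Fpn p n"
  shows "interpolates (n * (p - 1)) p n B"
  unfolding interpolates_def
proof (intro allI impI)
  fix f :: "(nat \<Rightarrow> nat) \<Rightarrow> nat" assume f: "\<forall>x\<in>B. f x < p"
  have finB: "finite B" using assms(2) Fpn_sub finite_Box finite_subset by metis
  define c where "c e = (\<Sum>b\<in>B. f b * (\<Prod>i<n. coefL p (b i) (e i)))" for e
  show "\<exists>c. \<forall>x\<in>B. f x = eval_poly (n * (p - 1)) p n c x"
  proof (intro exI ballI)
    fix x assume x: "x \<in> B"
    have "(\<Sum>e\<in>Box n (p-1). c e * (\<Prod>i<n. x i ^ e i))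
        = (\<Sum>e\<in>Box n (p-1). \<Sum>b\<in>B. f b * (\<Prod>i<n. coefL p (b i) (e i) * x i ^ e i))"
      by (simp add: c_def sum_distrib_right prod.distrib mult.assoc)
    also have "\<dots> = (\<Sum>b\<in>B. \<Sum>e\<in>Box n (p-1). f b * (\<Prod>i<n. coefL p (b i) (e i) * x i ^ e i))"
      by (rule sum.swap)
    also have "\<dots> = (\<Sum>b\<in>B. f b * (\<Prod>i<n. \<Sum>k\<le>p-1. coefL p (b i) k * x i ^ k))"
    proof (intro sum.cong refl)
      fix b
      have "(\<Sum>e\<in>Box n (p-1). f b * (\<Prod>i<n. coefL p (b i) (e i) * x i ^ e i))
          = f b * (\<Sum>e\<in>Box n (p-1). \<Prod>i<n. coefL p (b i) (e i) * x i ^ e i)"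
        by (simp add: sum_distrib_left)
      also have "(\<Sum>e\<in>Box n (p-1). \<Prod>i<n. coefL p (b i) (e i) * x i ^ e i)
          = (\<Prod>i<n. \<Sum>k\<le>p-1. coefL p (b i) k * x i ^ k)"
        using prod_sum_box[of "\<lambda>i k. coefL p (b i) k * x i ^ k" n "p-1"] by simp
      finally show "(\<Sum>e\<in>Box n (p-1). f b * (\<Prod>i<n. coefL p (b i) (e i) * x i ^ e i))
          = f b * (\<Prod>i<n. \<Sum>k\<le>p-1. coefL p (b i) k * x i ^ k)" .
    qed
    finally have eq: "(\<Sum>e\<in>Box n (p-1). c e * (\<Prod>i<n. x i ^ e i))
        = (\<Sum>b\<in>B. f b * (\<Prod>i<n. \<Sum>k\<le>p-1. coefL p (b i) k * x i ^ k))" .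
    have "[(\<Sum>b\<in>B. f b * (\<Prod>i<n. \<Sum>k\<le>p-1. coefL p (b i) k * x i ^ k))
        = (\<Sum>b\<in>B. f b * (if x = b then 1 else 0))] (mod p)"
    proof (intro cong_sum cong_mult cong_refl)
      fix b assume b: "b \<in> B"
      have xb: "x \<in> Fpn p n" "b \<in> Fpn p n" using x b assms(2) by auto
      show "[(\<Prod>i<n. \<Sum>k\<le>p-1. coefL p (b i) k * x i ^ k) = (if x = b then 1 else 0)] (mod p)"
        using ind_eval[OF assms(1) xb] prime_gt_1_nat[OF assms(1)] unfolding cong_def by simp
    qed
    also have "(\<Sum>b\<in>B. f b * (if x = b then 1 else 0)) = f x"
    proof -
      have "(\<Sum>b\<in>B. f b * (if x = b then 1 else 0)) = (\<Sum>b\<in>B. if x = b then f b else 0)"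
        by (intro sum.cong) auto
      also have "\<dots> = f x" using finB x by (simp add: sum.delta')
      finally show ?thesis .
    qed
    finally have "[(\<Sum>e\<in>Box n (p-1). c e * (\<Prod>i<n. x i ^ e i)) = f x] (mod p)" using eq by simp
    hence "(\<Sum>e\<in>Box n (p-1). c e * (\<Prod>i<n. x i ^ e i)) mod p = f x"
      using f x by (simp add: cong_def)
    thus "f x = eval_poly (n * (p - 1)) p n c x"
      unfolding eval_poly_def mon_full by simp
  qed
qed



lemma slice_rank2:
  assumes "prime p" "m \<ge> 2" "finite S" "finite R" "\<forall>s\<in>S. \<not> int p dvd w s"
    and "diagc p m S w T" "decomp p m R F G T" "indep m G"
  shows "card S \<le> m * card R"
proof -
  define k where "k = m - 2"
  have k: "m = Suc (Suc k)" using assms(2) by (simp add: k_def)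
  have "card S \<le> Suc (Suc k) * card R"
    by (rule slice_rank[OF assms(1,3,4,5)]) (use assms(6-8) k in simp_all)
  thus ?thesis using k by simp
qed

lemma bin_sum_mod:
  fixes a :: "nat \<Rightarrow> nat \<Rightarrow> nat"
  assumes "p > 0" "\<forall>j<p. a j i \<le> 1"
  shows "(\<Sum>j<p. a j i) mod p = 0 \<longleftrightarrow> (\<forall>j<p. a j i = a 0 i)"
proof
  assume H: "(\<Sum>j<p. a j i) mod p = 0"
  have le: "(\<Sum>j<p. a j i) \<le> p" using sum_bounded_above[of "{..<p}" "\<lambda>j. a j i" 1] assms(2) by simp
  from H obtain q where q: "(\<Sum>j<p. a j i) = p * q" by (metis mod_eq_0_iff_dvd dvd_def)
  have "q \<le> 1" using le q assms(1) by (metis mult_le_cancel1 nat_mult_1_right)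
  hence "q = 0 \<or> q = 1" by auto
  thus "\<forall>j<p. a j i = a 0 i"
  proof
    assume "q = 0"
    hence "\<forall>j<p. a j i = 0" using q by simp
    thus ?thesis using assms(1) by simp
  next
    assume "q = 1"
    hence s: "(\<Sum>j<p. a j i) = p" using q by simp
    have "\<forall>j<p. a j i = 1"
    proof (rule ccontr)
      assume "\<not> (\<forall>j<p. a j i = 1)"
      then obtain j0 where j0: "j0 < p" "a j0 i \<noteq> 1" by blast
      hence z: "a j0 i = 0" using assms(2) by fastforce
      have "(\<Sum>j<p. a j i) = a j0 i + (\<Sum>j\<in>{..<p} - {j0}. a j i)"
        using j0(1) by (simp add: sum.remove)
      also have "(\<Sum>j\<in>{..<p} - {j0}. a j i) \<le> card ({..<p} - {j0}) * 1"
        using sum_bounded_above[of "{..<p} - {j0}" "\<lambda>j. a j i" 1] assms(2) by simp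
      finally have "(\<Sum>j<p. a j i) \<le> p - 1" using z j0(1) by simp
      thus False using s assms(1) by simp
    qed
    thus ?thesis using assms(1) by simp
  qed
next
  assume H: "\<forall>j<p. a j i = a 0 i"
  have "(\<Sum>j<p. a j i) = (\<Sum>j<p. a 0 i)" using H by (intro sum.cong refl) blast
  thus "(\<Sum>j<p. a j i) mod p = 0" by simp
qed

lemma sum_zero_iff_eq:
  fixes a :: "nat \<Rightarrow> nat \<Rightarrow> nat"
  assumes "p > 0" "\<forall>j<p. a j \<in> cube n"
  shows "(\<lambda>i. (\<Sum>j<p. a j i) mod p) = (\<lambda>_. 0) \<longleftrightarrow> (\<forall>j<p. a j = a 0)"
proof -
  have b: "\<forall>j<p. a j i \<le> 1" for i
  proof (intro allI impI)
    fix j assume "j < p"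
    hence "a j \<in> cube n" using assms(2) by blast
    thus "a j i \<le> 1" by (cases "i < n") (auto simp: cube_def)
  qed
  have "(\<lambda>i. (\<Sum>j<p. a j i) mod p) = (\<lambda>_. 0) \<longleftrightarrow> (\<forall>i. (\<Sum>j<p. a j i) mod p = 0)"
    by (simp add: fun_eq_iff)
  also have "\<dots> \<longleftrightarrow> (\<forall>i. \<forall>j<p. a j i = a 0 i)"
  proof -
    have "\<forall>i. ((\<Sum>j<p. a j i) mod p = 0 \<longleftrightarrow> (\<forall>j<p. a j i = a 0 i))"
    proof
      fix i show "(\<Sum>j<p. a j i) mod p = 0 \<longleftrightarrow> (\<forall>j<p. a j i = a 0 i)"
        by (rule bin_sum_mod[OF assms(1) b])
    qed
    thus ?thesis by (simp only:)
  qed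
  also have "\<dots> \<longleftrightarrow> (\<forall>j<p. a j = a 0)"
  proof
    assume H: "\<forall>i. \<forall>j<p. a j i = a 0 i"
    show "\<forall>j<p. a j = a 0"
    proof (intro allI impI)
      fix j assume "j < p"
      thus "a j = a 0" using H by (intro ext) blast
    qed
  next
    assume H: "\<forall>j<p. a j = a 0"
    show "\<forall>i. \<forall>j<p. a j i = a 0 i"
    proof (intro allI impI)
      fix i j assume "j < p"
      hence "a j = a 0" using H by blast
      thus "a j i = a 0 i" by simp
    qed
  qed
  finally show ?thesis .
qed

lemma card_Qs_le:
  assumes "p \<ge> 2"
  shows "card (Qs n k) \<le> card (monomials k p n)"
proof -
  define \<iota> where "\<iota> S = (\<lambda>i. if i \<in> S then 1 else 0 :: nat)" for S :: "nat set"
  have inj: "inj_on \<iota> (Qs n k)"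
  proof (rule inj_onI)
    fix S1 S2 assume "\<iota> S1 = \<iota> S2"
    hence "\<forall>i. (i \<in> S1) = (i \<in> S2)" unfolding \<iota>_def by (metis fun_cong zero_neq_one)
    thus "S1 = S2" by blast
  qed
  have sub: "\<iota> ` Qs n k \<subseteq> monomials k p n"
  proof
    fix e assume "e \<in> \<iota> ` Qs n k"
    then obtain S where S: "S \<in> Qs n k" "e = \<iota> S" by blast
    have "(\<Sum>i<n. e i) = card ({..<n} \<inter> S)"
      unfolding S(2) \<iota>_def by (simp add: sum.If_cases)
    also have "{..<n} \<inter> S = S" using S(1) by (auto simp: Qs_def)
    finally have "(\<Sum>i<n. e i) \<le> k" using S(1) by (simp add: Qs_def)
    moreover have "\<forall>i<n. e i \<le> p - 1"
    proof (intro allI impI)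
      fix i assume "i < n"
      have "1 \<le> p - 1" using assms by simp
      thus "e i \<le> p - 1" using S(2) by (simp add: \<iota>_def)
    qed
    moreover have "\<forall>i\<ge>n. e i = 0" using S by (auto simp: \<iota>_def Qs_def)
    ultimately show "e \<in> monomials k p n" by (simp add: monomials_def)
  qed
  have fin: "finite (monomials k p n)" using mon_sub finite_Box finite_subset by metis
  show ?thesis by (rule card_inj_on_le[OF inj sub fin])
qed

lemma Tn_cong:
  fixes a :: "nat \<Rightarrow> nat \<Rightarrow> nat" and c :: "(nat \<Rightarrow> nat) \<Rightarrow> nat"
  shows "[int ((\<Sum>e\<in>M. c e * (\<Prod>i<n. ((\<Sum>j<p. a j i) mod p) ^ e i)) mod p)
          = (\<Sum>e\<in>M. int (c e) * (\<Prod>i<n. (\<Sum>j<p. int (a j i)) ^ e i))] (mod int p)"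
proof -
  have "[(\<Sum>e\<in>M. c e * (\<Prod>i<n. ((\<Sum>j<p. a j i) mod p) ^ e i)) mod p
        = (\<Sum>e\<in>M. c e * (\<Prod>i<n. (\<Sum>j<p. a j i) ^ e i))] (mod p)"
    by (simp only: cong_mod_left) (intro cong_sum cong_mult cong_refl cong_prod cong_pow, simp)
  hence "[int ((\<Sum>e\<in>M. c e * (\<Prod>i<n. ((\<Sum>j<p. a j i) mod p) ^ e i)) mod p)
        = int (\<Sum>e\<in>M. c e * (\<Prod>i<n. (\<Sum>j<p. a j i) ^ e i))] (mod int p)"
    by (simp only: cong_int_iff)
  thus ?thesis by simp
qed

theorem theorem3p1:
  fixes p d n :: nat and A :: "(nat \<Rightarrow> nat) set"
  assumes "prime p"
    and "A \<subseteq> cube n"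
    and "card A > p * card (monomials (d div p) p n)"
  shows "int_deg p n (kfold_sumset p p A) > d"
proof -
  define B where "B = kfold_sumset p p A"
  have p1: "p > 1" using prime_gt_1_nat[OF assms(1)] .
  have BF: "B \<subseteq> Fpn p n"
  proof
    fix x assume "x \<in> B"
    then obtain a where a: "x = (\<lambda>i. (\<Sum>j<p. a j i) mod p)" "\<forall>j<p. a j \<in> A"
      unfolding B_def kfold_sumset_def by blast
    have "\<forall>i\<ge>n. x i = 0"
    proof (intro allI impI)
      fix i assume "n \<le> i"
      hence "\<forall>j<p. a j i = 0" using a(2) assms(2) by (auto simp: cube_def)
      thus "x i = 0" using a(1) by simp
    qed
    moreover have "\<forall>i<n. x i < p" using a(1) p1 by simp
    ultimately show "x \<in> Fpn p n" by (simp add: Fpn_def)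
  qed
  have finA: "finite A" by (rule finite_subset[OF _ finite_Box]) (use assms(2) cube_sub in blast)
  have nonint: "\<not> interpolates d' p n B" if dd: "d' \<le> d" for d'
  proof
    assume ip: "interpolates d' p n B"
    define f where "f x = (if x = (\<lambda>_::nat. 0::nat) then 1 else 0 :: nat)" for x :: "nat \<Rightarrow> nat"
    have fp: "\<forall>x\<in>B. f x < p" using p1 by (simp add: f_def)
    obtain c where c: "\<forall>x\<in>B. f x = eval_poly d' p n c x"
      using mp[OF spec[OF ip[unfolded interpolates_def], of f] fp] by blast
    define M where "M = monomials d' p n"
    have finM: "finite M" unfolding M_def by (rule finite_subset[OF mon_sub finite_Box])
    define Tn where "Tn a = (\<Sum>e\<in>M. int (c e) * (\<Prod>i<n. (\<Sum>j<p. int (a j i)) ^ e i))" for a :: "nat \<Rightarrow> nat \<Rightarrow> nat"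
    have LDT: "LD p n d Tn"
    proof -
      have "LD p n d (\<lambda>a. \<Sum>e\<in>M. int (c e) * (\<Prod>i<n. (\<Sum>j<p. int (a j i)) ^ e i))"
      proof (rule LD_sum[OF finM])
        fix e assume e: "e \<in> M"
        have "LD p n (\<Sum>i<n. e i * 1) (\<lambda>a. \<Prod>i<n. (\<Sum>j<p. int (a j i)) ^ e i)"
        proof (rule LD_prod)
          fix i assume i: "i \<in> {..<n}"
          show "LD p n (e i * 1) (\<lambda>a. (\<Sum>j<p. int (a j i)) ^ e i)"
          proof (rule LD_pow)
            show "LD p n 1 (\<lambda>a. \<Sum>j<p. int (a j i))"
            proof (rule LD_sum)
              fix j assume "j \<in> {..<p}"
              thus "LD p n 1 (\<lambda>a. int (a j i))" using i by (intro LD_var) auto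
            qed simp
          qed
        qed simp
        moreover have "(\<Sum>i<n. e i * 1) \<le> d" using e dd by (simp add: M_def monomials_def)
        ultimately have "LD p n d (\<lambda>a. \<Prod>i<n. (\<Sum>j<p. int (a j i)) ^ e i)" by (rule LD_deg_mono)
        thus "LD p n d (\<lambda>a. int (c e) * (\<Prod>i<n. (\<Sum>j<p. int (a j i)) ^ e i))" by (rule LD_scale)
      qed
      thus ?thesis unfolding Tn_def .
    qed
    then obtain g where g: "lowdeg p n d g" "\<forall>a. bin p n a \<longrightarrow> Tn a = g a" unfolding LD_def by blast
    have dlt: "d < p * Suc (d div p)"
    proof -
      have "d mod p < p" using p1 by simp
      moreover have "p * (d div p) + d mod p = d" by (rule mult_div_mod_eq)
      ultimately show ?thesis unfolding mult_Suc_right by linarith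
    qed
    obtain G where G: "\<forall>j S a b. G j S (a(j:=b)) = G j S a"
      "\<forall>a. g a = (\<Sum>j<p. \<Sum>S\<in>Qs n (d div p). FF S (a j) * G j S a)"
      using lowdeg_slice[OF g(1) dlt] by blast
    have dg: "diagc p p A (\<lambda>_. 1) g"
      unfolding diagc_def
    proof (intro allI impI)
      fix a :: "nat \<Rightarrow> nat \<Rightarrow> nat" assume aA: "\<forall>j<p. a j \<in> A"
      define P where "P = (\<forall>j<p. a j = a 0)"
      have cub: "\<forall>j<p. a j \<in> cube n" using aA assms(2) by (simp add: subset_iff)
      have bn: "bin p n a" unfolding bin_def
      proof (intro allI impI)
        fix j i assume "j < p" "i < n"
        thus "a j i \<le> 1" using cub by (simp add: cube_def)
      qed
      define x where "x = (\<lambda>i. (\<Sum>j<p. a j i) mod p)"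
      have "\<exists>a'. x = (\<lambda>i. (\<Sum>j<p. a' j i) mod p) \<and> (\<forall>j<p. a' j \<in> A)"
        by (rule exI[of _ a]) (simp add: x_def aA)
      hence xB: "x \<in> B" unfolding B_def kfold_sumset_def by (simp only: mem_Collect_eq)
      have p0: "0 < p" using p1 by simp
      have xP: "x = (\<lambda>_. 0) \<longleftrightarrow> P"
        unfolding P_def x_def by (rule sum_zero_iff_eq[OF p0 cub])
      have fx: "f x = (if P then 1 else 0)"
        unfolding f_def using xP by simp
      have "[int (eval_poly d' p n c x) = Tn a] (mod int p)"
        using Tn_cong[where a=a and c=c and M=M and n=n and p=p] unfolding Tn_def eval_poly_def M_def x_def .
      moreover have "eval_poly d' p n c x = f x" using c xB by simp
      ultimately have "[int (f x) = g a] (mod int p)" using g(2) bn by simp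
      hence "[g a = int (f x)] (mod int p)" by (rule cong_sym)
      hence "[g a = (if P then 1 else 0)] (mod int p)" using fx by (cases P) simp_all
      thus "[g a = (if \<forall>j<p. a j = a 0 then 1 else 0)] (mod int p)" unfolding P_def .
    qed
    have dc: "decomp p p (Qs n (d div p)) (\<lambda>j. FF) G g"
      unfolding decomp_def using G(2) by simp
    have ind: "indep p G" unfolding indep_def using G(1) by blast
    have "card A \<le> p * card (Qs n (d div p))"
      by (rule slice_rank2[OF assms(1) _ finA finite_Qs _ dg dc ind]) (use p1 in auto)
    also have "\<dots> \<le> p * card (monomials (d div p) p n)" using card_Qs_le p1 by simp
    finally show False using assms(3) by simp
  qed
  have ex: "interpolates (n * (p - 1)) p n B" by (rule interp_exists[OF assms(1) BF])
  have "interpolates (LEAST d. interpolates d p n B) p n B" by (rule LeastI[of "\<lambda>d. interpolates d p n B", OF ex])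
  hence "\<not> (LEAST d. interpolates d p n B) \<le> d" using nonint by blast
  thus ?thesis unfolding int_deg_def B_def by simp
qed

end
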